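(* Let $a$ be a symmetric, sub-gaussian random variable with $\mathbb{E}a^2=1$ and $\|a-g\|_{TV}\le\varepsilon$ where $g\sim N(0,1)$. Let $\mathbf{a}$ be a random vector in $\mathbb{R}^n$ with i.i.d. coordinates distributed as $a$, let $\mathbf{x}\in S^{n-1}$, define $\mathbf{v}_{\mathbf{x}}=\mathbb{E}\,\mathrm{sign}(\langle\mathbf{a},\mathbf{x}\rangle)\mathbf{a}$ and $\lambda=\sqrt{2/\pi}$. Then $$|\langle\mathbf{v}_{\mathbf{x}},\mathbf{x}\rangle-\lambda|=\Big|\mathbb{E}|\langle\mathbf{a},\mathbf{x}\rangle|-\sqrt{2/\pi}\Big|\le4(\mathbb{E}a^4+\mathbb{E}g^4)^{1/4}\varepsilon^{1/4}.$$
   Context: $\|a-g\|_{TV}=\sup_A|P(a\in A)-P(g\in A)|$. $\mathrm{sign}(t)=1$ if $t\ge0$ and $-1$ otherwise. $S^{n-1}$ is the Euclidean unit sphere. *)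

theory Defs
  imports "HOL-Probability.Probability"
begin

definition sign_pm :: "real \<Rightarrow> real" where
  "sign_pm t = (if t \<ge> 0 then 1 else -1)"

definition gauss :: "real measure" where
  "gauss = density lborel std_normal_density"

definition tv_dist :: "real measure \<Rightarrow> real measure \<Rightarrow> real" where
  "tv_dist P Q = (SUP A \<in> sets borel. \<bar>measure P A - measure Q A\<bar>)"

definition subgaussian :: "real measure \<Rightarrow> bool" where
  "subgaussian M \<longleftrightarrow> (\<exists>K>0. \<forall>t\<ge>0. measure M {x. \<bar>x\<bar> \<ge> t} \<le> 2 * exp (- (t^2 / K^2)))"

definition symmetric_law :: "real measure \<Rightarrow> bool" where
  "symmetric_law M \<longleftrightarrow> distr M borel uminus = M"

end

theory Submission
  imports Defs "HOL-Real_Asymp.Real_Asymp"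
begin

lemma tv_ge:
  fixes \<mu> \<gamma> :: "real measure"
  assumes "prob_space \<mu>" "prob_space \<gamma>" "B \<in> sets borel"
  shows "\<bar>measure \<mu> B - measure \<gamma> B\<bar> \<le> tv_dist \<mu> \<gamma>"
  unfolding tv_dist_def
proof (rule cSUP_upper)
  show "B \<in> sets borel" by fact
  show "bdd_above ((\<lambda>A. \<bar>measure \<mu> A - measure \<gamma> A\<bar>) ` sets borel)"
  proof (rule bdd_aboveI)
    fix y assume "y \<in> (\<lambda>A. \<bar>measure \<mu> A - measure \<gamma> A\<bar>) ` sets borel"
    then obtain A where "y = \<bar>measure \<mu> A - measure \<gamma> A\<bar>" by auto
    moreover have "measure \<mu> A \<le> 1" "measure \<gamma> A \<le> 1"
      using assms prob_space.prob_le_1 by auto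
    moreover have "measure \<mu> A \<ge> 0" "measure \<gamma> A \<ge> 0" by auto
    ultimately show "y \<le> 1" by linarith
  qed
qed

lemma enn2real_add: "a \<noteq> \<top> \<Longrightarrow> b \<noteq> \<top> \<Longrightarrow> enn2real (a + b) = enn2real a + enn2real (b::ennreal)"
  by (cases a rule: ennreal_cases; cases b rule: ennreal_cases) (auto simp: ennreal_plus[symmetric] simp del: ennreal_plus)

lemma coupling_exists:
  fixes \<mu> \<gamma> :: "real measure"
  assumes pm: "prob_space \<mu>" and pg: "prob_space \<gamma>"
    and sm: "sets \<mu> = sets borel" and sg: "sets \<gamma> = sets borel"
  shows "\<exists>P. sets P = sets (borel \<Otimes>\<^sub>M borel) \<and> distr P borel fst = \<mu> \<and> distr P borel snd = \<gamma>
            \<and> (\<exists>B\<in>sets borel. measure P {p. fst p \<noteq> snd p} \<le> measure \<mu> B - measure \<gamma> B)"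
proof -
  define K where "K = (\<lambda>b::bool. if b then \<mu> else \<gamma>)"
  have Kmeas: "K \<in> measurable (count_space UNIV) (subprob_algebra borel)"
    using pm pg sm sg by (auto simp: K_def space_subprob_algebra prob_space_imp_subprob_space)
  define \<nu> where "\<nu> = bind (count_space UNIV) K"
  have sets_nu: "sets \<nu> = sets borel"
    unfolding \<nu>_def by (rule sets_bind) (use sm sg in \<open>auto simp: K_def\<close>)
  have space_nu: "space \<nu> = UNIV" using sets_eq_imp_space_eq[OF sets_nu] by simp
  have em_nu: "emeasure \<nu> A = emeasure \<mu> A + emeasure \<gamma> A" if "A \<in> sets borel" for A
    unfolding \<nu>_def using that Kmeas
    by (subst emeasure_bind[where N=borel]) (auto simp: nn_integral_count_space_finite UNIV_bool K_def)
  interpret nu: finite_measure \<nu>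
  proof
    have "emeasure \<nu> (space \<nu>) = emeasure \<mu> UNIV + emeasure \<gamma> UNIV"
      by (simp add: space_nu em_nu)
    also have "\<dots> = 2"
      using prob_space.emeasure_space_1[OF pm] prob_space.emeasure_space_1[OF pg]
        sets_eq_imp_space_eq[OF sm] sets_eq_imp_space_eq[OF sg] by simp
    finally show "emeasure \<nu> (space \<nu>) \<noteq> \<infinity>" by simp
  qed
  have ac_m: "absolutely_continuous \<nu> \<mu>"
    unfolding absolutely_continuous_def
  proof
    fix A assume "A \<in> null_sets \<nu>"
    then have "A \<in> sets borel" "emeasure \<nu> A = 0" using sets_nu by auto
    then show "A \<in> null_sets \<mu>" using em_nu[of A] sm by (auto simp: null_sets_def)
  qed
  have ac_g: "absolutely_continuous \<nu> \<gamma>"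
    unfolding absolutely_continuous_def
  proof
    fix A assume "A \<in> null_sets \<nu>"
    then have "A \<in> sets borel" "emeasure \<nu> A = 0" using sets_nu by auto
    then show "A \<in> null_sets \<gamma>" using em_nu[of A] sg by (auto simp: null_sets_def)
  qed
  define f where "f = RN_deriv \<nu> \<mu>"
  define h where "h = RN_deriv \<nu> \<gamma>"
  have fmeas[measurable]: "f \<in> borel_measurable borel"
    unfolding f_def using borel_measurable_RN_deriv[of \<nu> \<mu>] by (simp add: measurable_cong_sets[OF sets_nu refl])
  have hmeas[measurable]: "h \<in> borel_measurable borel"
    unfolding h_def using borel_measurable_RN_deriv[of \<nu> \<gamma>] by (simp add: measurable_cong_sets[OF sets_nu refl])
  have dens_f: "density \<nu> f = \<mu>"
    unfolding f_def using nu.density_RN_deriv[OF ac_m] sm sets_nu by simp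
  have dens_g: "density \<nu> h = \<gamma>"
    unfolding h_def using nu.density_RN_deriv[OF ac_g] sg sets_nu by simp
  have mu_int: "emeasure \<mu> A = (\<integral>\<^sup>+x. f x * indicator A x \<partial>\<nu>)" if "A \<in> sets borel" for A
    using that sets_nu by (subst dens_f[symmetric], subst emeasure_density) auto
  have g_int: "emeasure \<gamma> A = (\<integral>\<^sup>+x. h x * indicator A x \<partial>\<nu>)" if "A \<in> sets borel" for A
    using that sets_nu by (subst dens_g[symmetric], subst emeasure_density) auto

  have nn_cong_nu: "\<And>F. (\<integral>\<^sup>+x. F x \<partial>\<nu>) = (\<integral>\<^sup>+x. F x \<partial>\<nu>)" by simp
  have mf: "F \<in> borel_measurable \<nu>" if "F \<in> borel_measurable borel" for F :: "real \<Rightarrow> ennreal"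
    using that by (simp add: measurable_cong_sets[OF sets_nu refl])
  define m where "m = (\<lambda>x. min (f x) (h x))"
  have mmeas[measurable]: "m \<in> borel_measurable borel" unfolding m_def by measurable
  define D where "D = (\<integral>\<^sup>+x. (f x - m x) \<partial>\<nu>)"
  have split_f: "(\<integral>\<^sup>+x. f x * indicator A x \<partial>\<nu>) =
      (\<integral>\<^sup>+x. m x * indicator A x \<partial>\<nu>) + (\<integral>\<^sup>+x. (f x - m x) * indicator A x \<partial>\<nu>)"
    if "A \<in> sets borel" for A
  proof -
    have "(\<integral>\<^sup>+x. f x * indicator A x \<partial>\<nu>) = (\<integral>\<^sup>+x. m x * indicator A x + (f x - m x) * indicator A x \<partial>\<nu>)"
      by (intro nn_integral_cong) (auto simp: m_def indicator_def min_def add_diff_inverse_ennreal; metis ennreal_diff_self)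
    also have "\<dots> = (\<integral>\<^sup>+x. m x * indicator A x \<partial>\<nu>) + (\<integral>\<^sup>+x. (f x - m x) * indicator A x \<partial>\<nu>)"
      using that by (intro nn_integral_add mf) auto
    finally show ?thesis .
  qed
  have split_h: "(\<integral>\<^sup>+x. h x * indicator A x \<partial>\<nu>) =
      (\<integral>\<^sup>+x. m x * indicator A x \<partial>\<nu>) + (\<integral>\<^sup>+x. (h x - m x) * indicator A x \<partial>\<nu>)"
    if "A \<in> sets borel" for A
  proof -
    have "(\<integral>\<^sup>+x. h x * indicator A x \<partial>\<nu>) = (\<integral>\<^sup>+x. m x * indicator A x + (h x - m x) * indicator A x \<partial>\<nu>)"
      by (intro nn_integral_cong) (auto simp: m_def indicator_def min_def add_diff_inverse_ennreal; metis ennreal_diff_self)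
    also have "\<dots> = (\<integral>\<^sup>+x. m x * indicator A x \<partial>\<nu>) + (\<integral>\<^sup>+x. (h x - m x) * indicator A x \<partial>\<nu>)"
      using that by (intro nn_integral_add mf) auto
    finally show ?thesis .
  qed
  have sp_m: "space \<mu> = UNIV" using sets_eq_imp_space_eq[OF sm] by simp
  have sp_g: "space \<gamma> = UNIV" using sets_eq_imp_space_eq[OF sg] by simp
  have tot_f: "(\<integral>\<^sup>+x. f x * indicator UNIV x \<partial>\<nu>) = 1"
    using mu_int[of UNIV] prob_space.emeasure_space_1[OF pm] sp_m by simp
  have tot_g: "(\<integral>\<^sup>+x. h x * indicator UNIV x \<partial>\<nu>) = 1"
    using g_int[of UNIV] prob_space.emeasure_space_1[OF pg] sp_g by simp
  define Mm where "Mm = (\<integral>\<^sup>+x. m x * indicator UNIV x \<partial>\<nu>)"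
  have D_eq: "D = (\<integral>\<^sup>+x. (f x - m x) * indicator UNIV x \<partial>\<nu>)" unfolding D_def by simp
  define D' where "D' = (\<integral>\<^sup>+x. (h x - m x) * indicator UNIV x \<partial>\<nu>)"
  have e1: "Mm + D = 1" using split_f[of UNIV] tot_f by (simp add: Mm_def D_eq)
  have e2: "Mm + D' = 1" using split_h[of UNIV] tot_g by (simp add: Mm_def D'_def)
  have Mm_fin: "Mm \<noteq> \<infinity>"
  proof
    assume "Mm = \<infinity>" with e1 show False by simp
  qed
  have DD': "D' = D" using e1 e2 Mm_fin by (metis ennreal_add_left_cancel)
  have D_le: "D \<le> 1" using e1 by (metis add.commute le_iff_add)

  have I1: "(\<integral>\<^sup>+x. f x - m x \<partial>\<nu>) = D" unfolding D_def ..
  have I2: "(\<integral>\<^sup>+x. h x - m x \<partial>\<nu>) = D" using DD' unfolding D'_def by simp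
  have E1_le: "(\<integral>\<^sup>+x. (f x - m x) * indicator A x \<partial>\<nu>) \<le> D" for A
    unfolding D_def by (intro nn_integral_mono) (auto simp: indicator_def)
  have E2_le: "(\<integral>\<^sup>+x. (h x - m x) * indicator A x \<partial>\<nu>) \<le> D" for A
    unfolding DD'[symmetric] D'_def by (intro nn_integral_mono) (auto simp: indicator_def)
  define c where "c = inverse D"
  have cD: "D \<noteq> 0 \<Longrightarrow> c * D = 1"
  proof -
    assume "D \<noteq> 0"
    moreover have "D \<noteq> \<top>" using D_le by (auto simp: top_unique)
    ultimately show "c * D = 1"
      using mult_divide_eq_ennreal[of D 1] unfolding c_def divide_ennreal_def
      by (simp add: mult.commute)
  qed
  define d1 where "d1 = density \<nu> (\<lambda>s. (f s - m s) * c)"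
  define d2 where "d2 = density \<nu> (\<lambda>s. h s - m s)"
  define d3 where "d3 = density \<nu> m"
  have sets_d: "sets d1 = sets borel" "sets d2 = sets borel" "sets d3 = sets borel"
    unfolding d1_def d2_def d3_def using sets_nu by auto
  have em_d1: "emeasure d1 A = c * (\<integral>\<^sup>+x. (f x - m x) * indicator A x \<partial>\<nu>)" if "A \<in> sets borel" for A
  proof -
    have "emeasure d1 A = (\<integral>\<^sup>+x. c * ((f x - m x) * indicator A x) \<partial>\<nu>)"
      unfolding d1_def using that sets_nu
      by (subst emeasure_density) (auto intro!: nn_integral_cong simp: mult_ac)
    also have "\<dots> = c * (\<integral>\<^sup>+x. (f x - m x) * indicator A x \<partial>\<nu>)"
      using that by (intro nn_integral_cmult mf) auto
    finally show ?thesis .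
  qed
  have em_d2: "emeasure d2 A = (\<integral>\<^sup>+x. (h x - m x) * indicator A x \<partial>\<nu>)" if "A \<in> sets borel" for A
    unfolding d2_def using that sets_nu by (subst emeasure_density) auto
  have em_d3: "emeasure d3 A = (\<integral>\<^sup>+x. m x * indicator A x \<partial>\<nu>)" if "A \<in> sets borel" for A
    unfolding d3_def using that sets_nu by (subst emeasure_density) auto
  have sp_d: "space d1 = UNIV" "space d2 = UNIV" "space d3 = UNIV"
    using sets_d by (auto dest: sets_eq_imp_space_eq)
  interpret d2: finite_measure d2
  proof
    show "emeasure d2 (space d2) \<noteq> \<infinity>"
      using em_d2[of UNIV] E2_le[of UNIV] D_le sp_d by (auto simp: top_unique)
  qed
  define Q1 where "Q1 = d1 \<Otimes>\<^sub>M d2"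
  define Q2 where "Q2 = distr d3 (borel \<Otimes>\<^sub>M borel) (\<lambda>t. (t, t))"
  have sets_Q1: "sets Q1 = sets (borel \<Otimes>\<^sub>M (borel :: real measure))"
    unfolding Q1_def using sets_d by (intro sets_pair_measure_cong) auto
  have sets_Q2: "sets Q2 = sets (borel \<Otimes>\<^sub>M (borel :: real measure))"
    unfolding Q2_def by simp
  have diag_meas: "(\<lambda>t::real. (t, t)) \<in> measurable d3 (borel \<Otimes>\<^sub>M borel)"
    by (subst measurable_cong_sets[OF sets_d(3) refl]) measurable
  have em_Q1: "emeasure Q1 (A \<times> B) = c * (\<integral>\<^sup>+x. (f x - m x) * indicator A x \<partial>\<nu>) * (\<integral>\<^sup>+x. (h x - m x) * indicator B x \<partial>\<nu>)"
    if "A \<in> sets borel" "B \<in> sets borel" for A B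
    unfolding Q1_def using that sets_d
    by (subst d2.emeasure_pair_measure_Times) (auto simp: em_d1 em_d2)
  have em_Q2: "emeasure Q2 X = (\<integral>\<^sup>+x. m x * indicator {t. (t, t) \<in> X} x \<partial>\<nu>)"
    if "X \<in> sets (borel \<Otimes>\<^sub>M borel)" for X
  proof -
    have "emeasure Q2 X = emeasure d3 ((\<lambda>t. (t, t)) -` X \<inter> space d3)"
      unfolding Q2_def using that diag_meas by (subst emeasure_distr) auto
    also have "(\<lambda>t. (t, t)) -` X \<inter> space d3 = {t. (t, t) \<in> X}" using sp_d by auto
    also have "emeasure d3 {t. (t, t) \<in> X} = (\<integral>\<^sup>+x. m x * indicator {t. (t, t) \<in> X} x \<partial>\<nu>)"
    proof (rule em_d3)
      have "(\<lambda>t::real. (t, t)) -` X \<inter> space borel \<in> sets borel"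
        using that by (intro measurable_sets[of _ borel "borel \<Otimes>\<^sub>M borel"]) auto
      then show "{t. (t, t) \<in> X} \<in> sets borel" by (simp add: vimage_def Collect_mem_eq)
    qed
    finally show ?thesis .
  qed
  have Q1_tot: "emeasure Q1 (space Q1) \<le> 1"
  proof -
    have "space Q1 = UNIV \<times> UNIV" using sets_eq_imp_space_eq[OF sets_Q1] by (simp add: space_pair_measure)
    then have "emeasure Q1 (space Q1) = c * D * D"
      using em_Q1[of UNIV UNIV] by (simp add: I1 I2)
    also have "\<dots> \<le> 1"
      using cD D_le by (cases "D = 0") auto
    finally show ?thesis .
  qed
  have UNIV_pm: "UNIV \<in> sets (borel \<Otimes>\<^sub>M (borel :: real measure))"
    using sets.top[of "borel \<Otimes>\<^sub>M (borel :: real measure)"] by (simp add: space_pair_measure)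
  have Q2_tot: "emeasure Q2 (space Q2) \<le> 1"
  proof -
    have "space Q2 = UNIV" using sets_eq_imp_space_eq[OF sets_Q2] by (simp add: space_pair_measure)
    then have "emeasure Q2 (space Q2) = Mm" using em_Q2[OF UNIV_pm] by (simp add: Mm_def)
    then show ?thesis using e1 by (metis le_iff_add)
  qed
  define L where "L = (\<lambda>b::bool. if b then Q1 else Q2)"
  have Lmeas: "L \<in> measurable (count_space UNIV) (subprob_algebra (borel \<Otimes>\<^sub>M borel))"
  proof -
    have sQ1: "space Q1 = UNIV" using sets_eq_imp_space_eq[OF sets_Q1] by (simp add: space_pair_measure)
    have sQ2: "space Q2 = UNIV" using sets_eq_imp_space_eq[OF sets_Q2] by (simp add: space_pair_measure)
    have "subprob_space Q1" by (rule subprob_spaceI) (use Q1_tot sQ1 in auto)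
    moreover have "subprob_space Q2" by (rule subprob_spaceI) (use Q2_tot sQ2 in auto)
    ultimately have "Q1 \<in> space (subprob_algebra (borel \<Otimes>\<^sub>M borel))" "Q2 \<in> space (subprob_algebra (borel \<Otimes>\<^sub>M borel))"
      using sets_Q1 sets_Q2 by (auto simp: space_subprob_algebra)
    then show ?thesis by (auto simp: L_def)
  qed
  define P where "P = bind (count_space UNIV) L"
  have sets_P: "sets P = sets (borel \<Otimes>\<^sub>M (borel :: real measure))"
    unfolding P_def by (rule sets_bind) (use sets_Q1 sets_Q2 in \<open>auto simp: L_def\<close>)
  have em_P: "emeasure P X = emeasure Q1 X + emeasure Q2 X" if "X \<in> sets (borel \<Otimes>\<^sub>M borel)" for X
    unfolding P_def using that Lmeas
    by (subst emeasure_bind[where N="borel \<Otimes>\<^sub>M borel"]) (auto simp: nn_integral_count_space_finite UNIV_bool L_def)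
  have sp_P: "space P = UNIV" using sets_eq_imp_space_eq[OF sets_P] by (simp add: space_pair_measure)
  have fst_meas: "fst \<in> measurable P borel" by (subst measurable_cong_sets[OF sets_P refl]) measurable
  have snd_meas: "snd \<in> measurable P borel" by (subst measurable_cong_sets[OF sets_P refl]) measurable
  have marg1: "distr P borel fst = \<mu>"
  proof (rule measure_eqI)
    show "sets (distr P borel fst) = sets \<mu>" using sm by simp
    fix A assume "A \<in> sets (distr P borel fst)"
    then have A: "A \<in> sets borel" by simp
    have "emeasure (distr P borel fst) A = emeasure P (A \<times> UNIV)"
      using A fst_meas sp_P by (subst emeasure_distr) (auto intro!: arg_cong[where f="emeasure P"])
    also have "\<dots> = emeasure Q1 (A \<times> UNIV) + emeasure Q2 (A \<times> UNIV)"
      using A by (intro em_P) auto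
    also have "emeasure Q2 (A \<times> UNIV) = (\<integral>\<^sup>+x. m x * indicator A x \<partial>\<nu>)"
      using A by (subst em_Q2) (auto intro!: nn_integral_cong simp: indicator_def)
    also have "emeasure Q1 (A \<times> UNIV) = (\<integral>\<^sup>+x. (f x - m x) * indicator A x \<partial>\<nu>)"
    proof (cases "D = 0")
      case True
      then have "(\<integral>\<^sup>+x. (f x - m x) * indicator A x \<partial>\<nu>) = 0" using E1_le[of A] by simp
      then show ?thesis using A by (simp add: em_Q1)
    next
      case False
      have "emeasure Q1 (A \<times> UNIV) = c * (\<integral>\<^sup>+x. (f x - m x) * indicator A x \<partial>\<nu>) * D"
        using A by (simp add: em_Q1 I2)
      also have "\<dots> = (\<integral>\<^sup>+x. (f x - m x) * indicator A x \<partial>\<nu>)"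
        using cD[OF False] by (metis mult.commute mult.left_commute mult_1_right)
      finally show ?thesis .
    qed
    also have "(\<integral>\<^sup>+x. (f x - m x) * indicator A x \<partial>\<nu>) + (\<integral>\<^sup>+x. m x * indicator A x \<partial>\<nu>) = emeasure \<mu> A"
      using split_f[OF A] mu_int[OF A] by (simp add: add.commute)
    finally show "emeasure (distr P borel fst) A = emeasure \<mu> A" .
  qed
  have marg2: "distr P borel snd = \<gamma>"
  proof (rule measure_eqI)
    show "sets (distr P borel snd) = sets \<gamma>" using sg by simp
    fix A assume "A \<in> sets (distr P borel snd)"
    then have A: "A \<in> sets borel" by simp
    have "emeasure (distr P borel snd) A = emeasure P (UNIV \<times> A)"
      using A snd_meas sp_P by (subst emeasure_distr) (auto intro!: arg_cong[where f="emeasure P"])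
    also have "\<dots> = emeasure Q1 (UNIV \<times> A) + emeasure Q2 (UNIV \<times> A)"
      using A by (intro em_P) auto
    also have "emeasure Q2 (UNIV \<times> A) = (\<integral>\<^sup>+x. m x * indicator A x \<partial>\<nu>)"
      using A by (subst em_Q2) (auto intro!: nn_integral_cong simp: indicator_def)
    also have "emeasure Q1 (UNIV \<times> A) = (\<integral>\<^sup>+x. (h x - m x) * indicator A x \<partial>\<nu>)"
    proof (cases "D = 0")
      case True
      then have "(\<integral>\<^sup>+x. (h x - m x) * indicator A x \<partial>\<nu>) = 0" using E2_le[of A] by simp
      then show ?thesis using A by (simp add: em_Q1)
    next
      case False
      have "emeasure Q1 (UNIV \<times> A) = c * D * (\<integral>\<^sup>+x. (h x - m x) * indicator A x \<partial>\<nu>)"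
        using A by (simp add: em_Q1 I1)
      also have "\<dots> = (\<integral>\<^sup>+x. (h x - m x) * indicator A x \<partial>\<nu>)"
        using cD[OF False] by simp
      finally show ?thesis .
    qed
    also have "(\<integral>\<^sup>+x. (h x - m x) * indicator A x \<partial>\<nu>) + (\<integral>\<^sup>+x. m x * indicator A x \<partial>\<nu>) = emeasure \<gamma> A"
      using split_h[OF A] g_int[OF A] by (simp add: add.commute)
    finally show "emeasure (distr P borel snd) A = emeasure \<gamma> A" .
  qed
  define S where "S = {p::real \<times> real. fst p \<noteq> snd p}"
  have S_meas: "S \<in> sets (borel \<Otimes>\<^sub>M borel)"
  proof -
    have "{p \<in> space (borel \<Otimes>\<^sub>M borel). fst p \<noteq> (snd p :: real)} \<in> sets (borel \<Otimes>\<^sub>M borel)"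
      by measurable
    then show ?thesis by (simp add: S_def space_pair_measure)
  qed
  have PS: "emeasure P S \<le> D"
  proof -
    have "emeasure Q2 S = 0" using S_meas by (subst em_Q2) (auto simp: S_def)
    moreover have "emeasure Q1 S \<le> emeasure Q1 (UNIV \<times> UNIV)"
      by (intro emeasure_mono) (use UNIV_pm in \<open>auto simp: sets_Q1\<close>)
    moreover have "emeasure Q1 (UNIV \<times> UNIV) \<le> D"
      using em_Q1[of UNIV UNIV] cD D_le by (cases "D = 0") (auto simp: I1 I2)
    ultimately show ?thesis using em_P[OF S_meas] by simp
  qed
  define B where "B = {x. h x < f x}"
  have B_meas: "B \<in> sets borel" unfolding B_def by measurable
  have DB: "D = (\<integral>\<^sup>+x. (f x - m x) * indicator B x \<partial>\<nu>)"
  proof -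
    have f_fin: "AE x in \<nu>. f x \<noteq> \<top>"
      using nn_integral_PInf_AE[OF mf[OF fmeas]] tot_f by simp
    have "AE x in \<nu>. f x - m x = (f x - m x) * indicator B x"
      using f_fin
    proof eventually_elim
      case (elim x) then show ?case by (cases "h x < f x") (auto simp: B_def m_def min_def)
    qed
    then show ?thesis unfolding D_def by (rule nn_integral_cong_AE)
  qed
  have hB: "(\<integral>\<^sup>+x. h x * indicator B x \<partial>\<nu>) = (\<integral>\<^sup>+x. m x * indicator B x \<partial>\<nu>)"
    by (intro nn_integral_cong) (auto simp: B_def m_def indicator_def min_def)
  have muB: "emeasure \<mu> B = emeasure \<gamma> B + D"
    using split_f[OF B_meas] mu_int[OF B_meas] g_int[OF B_meas] hB DB by simp
  have Dfin: "D \<noteq> \<infinity>" using D_le by (auto simp: top_unique)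
  have "measure \<mu> B = measure \<gamma> B + enn2real D"
    unfolding measure_def using muB Dfin finite_measure.emeasure_finite[OF prob_space.finite_measure[OF pg]]
    by (simp add: enn2real_add)
  moreover have "measure P S \<le> enn2real D"
    unfolding measure_def using PS Dfin by (intro enn2real_mono) (auto simp: top.not_eq_extremum)
  ultimately have "measure P S \<le> measure \<mu> B - measure \<gamma> B" by simp
  then show ?thesis using sets_P marg1 marg2 B_meas unfolding S_def by blast
qed

lemma subg_moment4:
  fixes \<mu> :: "real measure"
  assumes pm: "prob_space \<mu>" and sm: "sets \<mu> = sets borel" and sg: "subgaussian \<mu>"
  shows "integrable \<mu> (\<lambda>t. t^4)"
proof -
  interpret prob_space \<mu> by fact
  obtain K where K: "K > 0" and tail: "\<And>t. t \<ge> 0 \<Longrightarrow> measure \<mu> {x. \<bar>x\<bar> \<ge> t} \<le> 2 * exp (- (t^2 / K^2))"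
    using sg unfolding subgaussian_def by auto
  define a where "a = (\<lambda>k::nat. (real k + 1)^4 * (2 * exp (- (real k^2 / K^2))))"
  have a_nn: "0 \<le> a k" for k unfolding a_def by simp
  have lim: "((\<lambda>k::nat. (real k + 1)^4 * exp (-(real k^2 / K^2)) * (real k + 1)^2) \<longlongrightarrow> 0) at_top"
    using K by real_asymp
  then have ev: "eventually (\<lambda>k. (real k + 1)^4 * exp (-(real k^2 / K^2)) * (real k + 1)^2 < 1) sequentially"
    by (rule order_tendstoD) simp
  have "eventually (\<lambda>k. norm (a k) \<le> 2 * (1 / (real k + 1)^2)) sequentially"
    using ev
  proof eventually_elim
    case (elim k)
    have pos: "(real k + 1)^2 > 0" by simp
    have "(real k + 1)^4 * exp (-(real k^2 / K^2)) \<le> 1 / (real k + 1)^2"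
      by (subst pos_le_divide_eq[OF pos]) (use elim in linarith)
    moreover have "norm (a k) = 2 * ((real k + 1)^4 * exp (-(real k^2 / K^2)))"
      using a_nn[of k] unfolding a_def by (simp add: algebra_simps)
    ultimately show ?case by linarith
  qed
  moreover have "summable (\<lambda>k::nat. 2 * (1 / (real k + 1)^2))"
  proof -
    have "summable (\<lambda>n::nat. 1 / (real n + 1)^2)"
      using sums_summable[OF inverse_squares_sums] by (simp add: add.commute)
    then show ?thesis by (rule summable_mult)
  qed
  ultimately have sa: "summable a" by (rule summable_comparison_test_ev)
  have sp: "space \<mu> = UNIV" using sets_eq_imp_space_eq[OF sm] by simp
  define S where "S = (\<lambda>k::nat. {x::real. real k \<le> \<bar>x\<bar>})"
  have S_meas: "S k \<in> sets \<mu>" for k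
  proof -
    have "{x \<in> space borel. real k \<le> \<bar>x::real\<bar>} \<in> sets borel" by measurable
    then show ?thesis using sm by (simp add: S_def)
  qed
  have pw: "ennreal (norm (x^4)) \<le> (\<Sum>k. ennreal ((real k + 1)^4) * indicator (S k) x)" for x :: real
  proof -
    define k0 where "k0 = nat \<lfloor>\<bar>x\<bar>\<rfloor>"
    have k0a: "real k0 \<le> \<bar>x\<bar>" unfolding k0_def by simp
    have k0b: "\<bar>x\<bar> \<le> real k0 + 1" unfolding k0_def by linarith
    have "norm (x^4) = \<bar>x\<bar>^4" by (simp add: power_abs)
    also have "\<dots> \<le> (real k0 + 1)^4" using k0b by (intro power_mono) auto
    finally have "ennreal (norm (x^4)) \<le> ennreal ((real k0 + 1)^4) * indicator (S k0) x"
      using k0a by (simp add: S_def ennreal_leI)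
    also have "\<dots> \<le> (\<Sum>k. ennreal ((real k + 1)^4) * indicator (S k) x)"
      by (metis ennreal_suminf_lessD not_le order_less_irrefl)
    finally show ?thesis .
  qed
  have "(\<integral>\<^sup>+x. ennreal (norm (x^4)) \<partial>\<mu>) \<le> (\<integral>\<^sup>+x. (\<Sum>k. ennreal ((real k + 1)^4) * indicator (S k) x) \<partial>\<mu>)"
    by (intro nn_integral_mono pw)
  also have "\<dots> = (\<Sum>k. \<integral>\<^sup>+x. ennreal ((real k + 1)^4) * indicator (S k) x \<partial>\<mu>)"
    using S_meas by (intro nn_integral_suminf) auto
  also have "\<dots> = (\<Sum>k. ennreal ((real k + 1)^4) * emeasure \<mu> (S k))"
    using S_meas by (simp add: nn_integral_cmult_indicator)
  also have "\<dots> \<le> (\<Sum>k. ennreal (a k))"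
  proof (intro suminf_le summableI)
    fix k
    have "emeasure \<mu> (S k) = ennreal (measure \<mu> (S k))" by (simp add: emeasure_eq_measure)
    also have "measure \<mu> (S k) \<le> 2 * exp (- (real k^2 / K^2))"
      using tail[of "real k"] by (simp add: S_def)
    finally have "emeasure \<mu> (S k) \<le> ennreal (2 * exp (- (real k^2 / K^2)))" by (simp add: ennreal_leI)
    then have "ennreal ((real k + 1)^4) * emeasure \<mu> (S k) \<le> ennreal ((real k + 1)^4) * ennreal (2 * exp (- (real k^2 / K^2)))"
      by (intro mult_left_mono) auto
    also have "\<dots> = ennreal (a k)" unfolding a_def by (simp add: ennreal_mult)
    finally show "ennreal ((real k + 1)^4) * emeasure \<mu> (S k) \<le> ennreal (a k)" .
  qed
  also have "\<dots> < \<infinity>" using ennreal_suminf_neq_top[OF sa a_nn] by (simp add: top.not_eq_extremum)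
  finally show ?thesis
    by (subst integrable_iff_bounded) (simp add: measurable_cong_sets[OF sm refl])
qed

lemma gauss_prob: "prob_space gauss"
  unfolding gauss_def by (rule prob_space_normal_density, simp)

lemma gauss_sets: "sets gauss = sets borel"
  unfolding gauss_def by simp

lemma gauss_integrable_pow: "integrable gauss (\<lambda>t. t^k)"
  unfolding gauss_def
  by (subst integrable_density) (auto simp: integrable_std_normal_moment)

lemma gauss_mean: "(\<integral>t. t \<partial>gauss) = 0"
  unfolding gauss_def
  using integral_std_normal_moment_odd[of 0]
  by (subst integral_density) auto

lemma gauss_abs_ip:
  fixes x :: "'n::finite \<Rightarrow> real"
  assumes x1: "(\<Sum>i\<in>UNIV. (x i)^2) = 1"
  shows "(\<integral>a. \<bar>\<Sum>i\<in>UNIV. a i * x i\<bar> \<partial>PiM UNIV (\<lambda>_. gauss)) = sqrt (2 / pi)"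
proof -
  define \<Omega> where "\<Omega> = PiM (UNIV :: 'n set) (\<lambda>_. gauss)"
  interpret prob_space \<Omega> unfolding \<Omega>_def by (intro prob_space_PiM gauss_prob)
  define J where "J = {i. x i \<noteq> 0}"
  have J_ne: "J \<noteq> {}"
  proof
    assume "J = {}"
    then have "\<And>i. x i = 0" by (auto simp: J_def)
    then show False using x1 by simp
  qed
  have comp: "distr \<Omega> gauss (\<lambda>a. a i) = gauss" for i
    unfolding \<Omega>_def by (rule distr_PiM_component) (auto intro: gauss_prob)
  have ind0: "indep_vars (\<lambda>_. gauss) (\<lambda>i a. a i) J"
  proof (subst indep_vars_iff_distr_eq_PiM)
    show "J \<noteq> {}" by fact
    show "random_variable gauss (\<lambda>a. a i)" for i
      unfolding \<Omega>_def by (rule measurable_component_singleton) simp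
    have "distr \<Omega> (\<Pi>\<^sub>M i\<in>J. gauss) (\<lambda>a. \<lambda>i\<in>J. a i) = (\<Pi>\<^sub>M i\<in>J. gauss)"
      using distr_PiM_reindex[of UNIV "\<lambda>_. gauss" id J] gauss_prob unfolding \<Omega>_def by simp
    also have "\<dots> = (\<Pi>\<^sub>M i\<in>J. distr \<Omega> gauss (\<lambda>a. a i))" by (simp add: comp)
    finally show "distr \<Omega> (\<Pi>\<^sub>M i\<in>J. gauss) (\<lambda>a. \<lambda>i\<in>J. a i) = (\<Pi>\<^sub>M i\<in>J. distr \<Omega> gauss (\<lambda>a. a i))" .
  qed
  have ind: "indep_vars (\<lambda>_. borel) (\<lambda>i a. x i * a i) J"
    using indep_vars_compose2[OF ind0, of "\<lambda>i t. x i * t" "\<lambda>_. borel"]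
    by (simp add: measurable_cong_sets[OF gauss_sets refl])
  have dist1: "distributed \<Omega> lborel (\<lambda>a. a i) std_normal_density" for i
  proof -
    have "distr \<Omega> lborel (\<lambda>a. a i) = distr \<Omega> gauss (\<lambda>a. a i)"
      by (rule distr_cong) (auto simp: gauss_sets)
    then show ?thesis
      unfolding distributed_def using comp[of i]
      by (auto simp: gauss_def \<Omega>_def intro!: measurable_component_singleton)
  qed
  have dist2: "distributed \<Omega> lborel (\<lambda>a. x i * a i) (normal_density 0 \<bar>x i\<bar>)" if "i \<in> J" for i
    using normal_density_affine[OF dist1[of i], of "x i" 0] that by (simp add: J_def)
  have "distributed \<Omega> lborel (\<lambda>a. \<Sum>i\<in>J. x i * a i)
           (normal_density (\<Sum>i\<in>J. 0) (sqrt (\<Sum>i\<in>J. \<bar>x i\<bar>^2)))"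
    by (rule sum_indep_normal) (use J_ne ind dist2 in \<open>auto simp: J_def\<close>)
  moreover have "(\<Sum>i\<in>J. \<bar>x i\<bar>^2) = 1"
  proof -
    have "(\<Sum>i\<in>J. \<bar>x i\<bar>^2) = (\<Sum>i\<in>UNIV. (x i)^2)"
      unfolding power2_abs by (rule sum.mono_neutral_left) (auto simp: J_def)
    then show ?thesis using x1 by simp
  qed
  ultimately have dS: "distributed \<Omega> lborel (\<lambda>a. \<Sum>i\<in>J. x i * a i) std_normal_density" by simp
  have "(\<integral>a. \<bar>\<Sum>i\<in>J. x i * a i\<bar> \<partial>\<Omega>) = (\<integral>y. std_normal_density y * \<bar>y\<bar> \<partial>lborel)"
    using distributed_integral[OF dS, of abs] by simp
  also have "\<dots> = sqrt (2 / pi)"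
    using integral_std_normal_moment_abs_odd[of 0] by simp
  finally have *: "(\<integral>a. \<bar>\<Sum>i\<in>J. x i * a i\<bar> \<partial>\<Omega>) = sqrt (2 / pi)" .
  have "(\<Sum>i\<in>UNIV. a i * x i) = (\<Sum>i\<in>J. x i * a i)" for a :: "'n \<Rightarrow> real"
  proof -
    have "(\<Sum>i\<in>UNIV. a i * x i) = (\<Sum>i\<in>UNIV. x i * a i)" by (simp add: mult.commute)
    also have "\<dots> = (\<Sum>i\<in>J. x i * a i)" by (rule sum.mono_neutral_right) (auto simp: J_def)
    finally show ?thesis .
  qed
  then show ?thesis using * unfolding \<Omega>_def by simp
qed

lemma quad_disc:
  fixes A B C :: real
  assumes A: "A \<ge> 0" and q: "\<And>t. 0 \<le> t^2 * A - 2 * t * C + B"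
  shows "C^2 \<le> A * B"
proof (cases "A = 0")
  case True
  show ?thesis
  proof (rule ccontr)
    assume "\<not> ?thesis"
    then have C0: "C \<noteq> 0" using True by simp
    have "0 \<le> ((B + 1) / (2 * C))^2 * A - 2 * ((B + 1) / (2 * C)) * C + B" by (rule q)
    also have "\<dots> = -1" using True C0 by (simp add: field_simps)
    finally show False by simp
  qed
next
  case False
  then have Ap: "A > 0" using A by simp
  have "0 \<le> (C / A)^2 * A - 2 * (C / A) * C + B" by (rule q)
  also have "\<dots> = B - C^2 / A" using Ap by (simp add: field_simps power2_eq_square)
  finally have "C^2 / A \<le> B" by simp
  then show ?thesis using Ap by (simp add: field_simps mult.commute)
qed

lemma CS_integral:
  fixes f g :: "'a \<Rightarrow> real"
  assumes f2: "integrable M (\<lambda>x. f x^2)" and g2: "integrable M (\<lambda>x. g x^2)"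
    and fg: "integrable M (\<lambda>x. f x * g x)"
  shows "(\<integral>x. f x * g x \<partial>M)^2 \<le> (\<integral>x. f x^2 \<partial>M) * (\<integral>x. g x^2 \<partial>M)"
proof (rule quad_disc)
  show "0 \<le> (\<integral>x. f x^2 \<partial>M)" by (rule integral_nonneg_AE) auto
  fix t :: real
  have "0 \<le> (\<integral>x. (t * f x - g x)^2 \<partial>M)" by (rule integral_nonneg_AE) auto
  also have "(\<integral>x. (t * f x - g x)^2 \<partial>M) = (\<integral>x. t^2 * f x^2 - 2 * t * (f x * g x) + g x^2 \<partial>M)"
    by (intro Bochner_Integration.integral_cong) (auto simp: power2_eq_square algebra_simps)
  also have "\<dots> = t^2 * (\<integral>x. f x^2 \<partial>M) - 2 * t * (\<integral>x. f x * g x \<partial>M) + (\<integral>x. g x^2 \<partial>M)"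
    using f2 g2 fg by simp
  finally show "0 \<le> t^2 * (\<integral>x. f x^2 \<partial>M) - 2 * t * (\<integral>x. f x * g x \<partial>M) + (\<integral>x. g x^2 \<partial>M)" .
qed

lemma pow4_powr: "0 \<le> (a::real) \<Longrightarrow> (a powr (1/4))^4 = a"
  by (cases "a = 0") (simp_all add: powr_power)

lemma four_ineq: "(a - b::real)^4 \<le> 8 * (a^4 + b^4)"
proof -
  have 1: "(a - b)^2 \<le> 2 * (a^2 + b^2)" using sum_squares_ge_zero[of "a+b" 0]
    by (simp add: power2_eq_square algebra_simps)
  have "(a - b)^4 = ((a - b)^2)^2" by simp
  also have "\<dots> \<le> (2 * (a^2 + b^2))^2" using 1 by (intro power_mono) auto
  also have "\<dots> = 4 * (a^2 + b^2)^2" by (simp add: power2_eq_square algebra_simps)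
  also have "(a^2 + b^2)^2 \<le> 2 * (a^4 + b^4)"
    using sum_squares_ge_zero[of "a^2 - b^2" 0] by (simp add: power2_eq_square algebra_simps eval_nat_numeral)
  finally show ?thesis by simp
qed

lemma four_ineq': "(a - b::real)^4 \<le> 8 * a^4 + 8 * b^4"
  using four_ineq[of a b] by (simp only: distrib_left)

lemma two_ineq: "(a - b::real)^2 \<le> 2 * a^2 + 2 * b^2"
  using sum_squares_ge_zero[of "a+b" 0] by (simp add: power2_eq_square algebra_simps)

lemma abs_le_sq: "\<bar>t::real\<bar> \<le> 1 + t^2"
  using sum_squares_ge_zero[of "\<bar>t\<bar> - 1" 0] by (simp add: power2_eq_square algebra_simps)

lemma abs_mult_le_sq: "\<bar>a * b::real\<bar> \<le> a^2 + b^2"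
proof -
  have "2 * (\<bar>a\<bar> * \<bar>b\<bar>) \<le> a^2 + b^2"
    using sum_squares_ge_zero[of "\<bar>a\<bar> - \<bar>b\<bar>" 0] by (simp add: power2_eq_square algebra_simps)
  moreover have "0 \<le> \<bar>a\<bar> * \<bar>b\<bar>" by simp
  ultimately show ?thesis unfolding abs_mult by linarith
qed

theorem lemma5p3:
  fixes \<mu> :: "real measure" and x :: "'n::finite \<Rightarrow> real" and \<epsilon> :: real
  assumes "prob_space \<mu>" and "sets \<mu> = sets borel"
    and "symmetric_law \<mu>" and "subgaussian \<mu>"
    and "integrable \<mu> (\<lambda>t. t^2)" and "(\<integral>t. t^2 \<partial>\<mu>) = 1"
    and "tv_dist \<mu> gauss \<le> \<epsilon>"
    and "(\<Sum>i\<in>UNIV. (x i)^2) = 1"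
  shows "let A = PiM (UNIV :: 'n set) (\<lambda>_. \<mu>);
             ip = (\<lambda>a. \<Sum>i\<in>UNIV. a i * x i);
             v = (\<lambda>i. \<integral>a. sign_pm (ip a) * a i \<partial>A);
             lam = sqrt (2 / pi)
         in \<bar>(\<Sum>i\<in>UNIV. v i * x i) - lam\<bar> = \<bar>(\<integral>a. \<bar>ip a\<bar> \<partial>A) - sqrt (2 / pi)\<bar>
          \<and> \<bar>(\<integral>a. \<bar>ip a\<bar> \<partial>A) - sqrt (2 / pi)\<bar>
              \<le> 4 * ((\<integral>t. t^4 \<partial>\<mu>) + (\<integral>t. t^4 \<partial>gauss)) powr (1/4) * \<epsilon> powr (1/4)"
proof -
  note pm = assms(1) and sm = assms(2) and sym = assms(3) and sg = assms(4)
    and m2 = assms(5) and tv = assms(7) and x1 = assms(8)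
  interpret mu: prob_space \<mu> by fact
  interpret ga: prob_space gauss by (rule gauss_prob)
  have sp_m: "space \<mu> = UNIV" using sets_eq_imp_space_eq[OF sm] by simp
  have mb: "measurable \<mu> = measurable borel" by (rule ext, rule measurable_cong_sets[OF sm refl])
  have m4: "integrable \<mu> (\<lambda>t. t^4)" by (rule subg_moment4[OF pm sm sg])
  have m1: "integrable \<mu> (\<lambda>t. t)"
  proof (rule Bochner_Integration.integrable_bound)
    show "integrable \<mu> (\<lambda>t. 1 + t^2)" using m2 by simp
    show "(\<lambda>t. t) \<in> borel_measurable \<mu>" by (simp add: mb)
    show "AE t in \<mu>. norm t \<le> norm (1 + t^2)" using abs_le_sq by auto
  qed
  have mean0: "(\<integral>t. t \<partial>\<mu>) = 0"
  proof -
    have "(\<integral>t. t \<partial>\<mu>) = (\<integral>t. t \<partial>distr \<mu> borel uminus)"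
      using sym unfolding symmetric_law_def by simp
    also have "\<dots> = (\<integral>t. - t \<partial>\<mu>)" by (subst integral_distr) (auto simp: mb)
    finally show ?thesis by simp
  qed
  obtain P B where sP: "sets P = sets (borel \<Otimes>\<^sub>M (borel :: real measure))"
    and marg1: "distr P borel fst = \<mu>" and marg2: "distr P borel snd = gauss"
    and B: "B \<in> sets borel" and PB: "measure P {p. fst p \<noteq> snd p} \<le> measure \<mu> B - measure gauss B"
    using coupling_exists[OF pm gauss_prob sm gauss_sets] by blast
  define S where "S = {p::real \<times> real. fst p \<noteq> snd p}"
  have pS: "measure P S \<le> \<epsilon>"
    using PB tv_ge[OF pm gauss_prob B] tv unfolding S_def by linarith
  have sp_P: "space P = UNIV" using sets_eq_imp_space_eq[OF sP] by (simp add: space_pair_measure)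
  have Pb: "measurable P = measurable (borel \<Otimes>\<^sub>M borel)" by (rule ext, rule measurable_cong_sets[OF sP refl])
  have fst_m: "fst \<in> measurable P borel" by (simp add: Pb)
  have snd_m: "snd \<in> measurable P borel" by (simp add: Pb)
  interpret P: prob_space P
  proof
    have "emeasure P (space P) = emeasure (distr P borel fst) UNIV"
      using fst_m sp_P by (subst emeasure_distr) auto
    then show "emeasure P (space P) = 1" using marg1 mu.emeasure_space_1 sp_m by simp
  qed
  have int_fst: "integrable P (\<lambda>p. g (fst p)) \<longleftrightarrow> integrable \<mu> g" if "g \<in> borel_measurable borel" for g :: "real \<Rightarrow> real"
    using integrable_distr_eq[OF fst_m that] marg1 by simp
  have int_snd: "integrable P (\<lambda>p. g (snd p)) \<longleftrightarrow> integrable gauss g" if "g \<in> borel_measurable borel" for g :: "real \<Rightarrow> real"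
    using integrable_distr_eq[OF snd_m that] marg2 by simp
  have I_fst: "(\<integral>p. g (fst p) \<partial>P) = (\<integral>t. g t \<partial>\<mu>)" if "g \<in> borel_measurable borel" for g :: "real \<Rightarrow> real"
    using integral_distr[OF fst_m that] marg1 by simp
  have I_snd: "(\<integral>p. g (snd p) \<partial>P) = (\<integral>t. g t \<partial>gauss)" if "g \<in> borel_measurable borel" for g :: "real \<Rightarrow> real"
    using integral_distr[OF snd_m that] marg2 by simp
  define \<delta> where "\<delta> = (\<lambda>p::real \<times> real. fst p - snd p)"
  have \<delta>_m: "\<delta> \<in> borel_measurable P" unfolding \<delta>_def by (simp add: Pb)
  have f1: "integrable P (\<lambda>p. fst p)" by (rule int_fst[of "\<lambda>t. t", THEN iffD2]) (auto intro: m1)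
  have g1: "integrable gauss (\<lambda>t::real. t)" using gauss_integrable_pow[of 1] by (simp only: power_one_right)
  have s1: "integrable P (\<lambda>p. snd p)" by (rule int_snd[of "\<lambda>t. t", THEN iffD2]) (auto intro: g1)
  have f2: "integrable P (\<lambda>p. (fst p)^2)" by (rule int_fst[of "\<lambda>t. t^2", THEN iffD2]) (auto intro: m2)
  have s2: "integrable P (\<lambda>p. (snd p)^2)" by (rule int_snd[of "\<lambda>t. t^2", THEN iffD2]) (auto intro: gauss_integrable_pow[of 2])
  have f4: "integrable P (\<lambda>p. (fst p)^4)" by (rule int_fst[of "\<lambda>t. t^4", THEN iffD2]) (auto intro: m4)
  have s4: "integrable P (\<lambda>p. (snd p)^4)" by (rule int_snd[of "\<lambda>t. t^4", THEN iffD2]) (auto intro: gauss_integrable_pow[of 4])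
  have d1: "integrable P \<delta>" unfolding \<delta>_def using f1 s1 by simp
  have d2: "integrable P (\<lambda>p. (\<delta> p)^2)"
  proof (rule Bochner_Integration.integrable_bound)
    show "integrable P (\<lambda>p. 2 * (fst p)^2 + 2 * (snd p)^2)" using f2 s2 by simp
    show "(\<lambda>p. (\<delta> p)^2) \<in> borel_measurable P" using \<delta>_m by simp
    show "AE p in P. norm ((\<delta> p)^2) \<le> norm (2 * (fst p)^2 + 2 * (snd p)^2)"
      using two_ineq by (auto simp: \<delta>_def)
  qed
  have d4: "integrable P (\<lambda>p. (\<delta> p)^4)"
  proof (rule Bochner_Integration.integrable_bound)
    show "integrable P (\<lambda>p. 8 * ((fst p)^4 + (snd p)^4))" using f4 s4 by simp
    show "(\<lambda>p. (\<delta> p)^4) \<in> borel_measurable P" using \<delta>_m by simp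
    show "AE p in P. norm ((\<delta> p)^4) \<le> norm (8 * ((fst p)^4 + (snd p)^4))"
    proof (rule AE_I2)
      fix p
      have "(\<delta> p)^4 \<le> 8 * ((fst p)^4 + (snd p)^4)" unfolding \<delta>_def by (rule four_ineq)
      moreover have "0 \<le> (\<delta> p)^4" "0 \<le> 8 * ((fst p)^4 + (snd p)^4)" by (auto simp: zero_le_even_power)
      ultimately show "norm ((\<delta> p)^4) \<le> norm (8 * ((fst p)^4 + (snd p)^4))" by simp
    qed
  qed
  have Ed: "(\<integral>p. \<delta> p \<partial>P) = 0"
  proof -
    have "(\<integral>p. \<delta> p \<partial>P) = (\<integral>p. fst p \<partial>P) - (\<integral>p. snd p \<partial>P)" unfolding \<delta>_def using f1 s1 by simp
    also have "(\<integral>p. fst p \<partial>P) = 0" using I_fst[of "\<lambda>t. t"] mean0 by simp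
    also have "(\<integral>p. snd p \<partial>P) = 0" using I_snd[of "\<lambda>t. t"] gauss_mean by simp
    finally show ?thesis by simp
  qed
  define M4 where "M4 = (\<integral>t. t^4 \<partial>\<mu>)"
  define G4 where "G4 = (\<integral>t. t^4 \<partial>gauss)"
  define V where "V = (\<integral>p. (\<delta> p)^2 \<partial>P)"
  define F where "F = (\<integral>p. (\<delta> p)^4 \<partial>P)"
  have M4_nn: "0 \<le> M4" unfolding M4_def by (rule integral_nonneg_AE) (auto simp: zero_le_even_power)
  have G4_nn: "0 \<le> G4" unfolding G4_def by (rule integral_nonneg_AE) (auto simp: zero_le_even_power)
  have V_nn: "0 \<le> V" unfolding V_def by (rule integral_nonneg_AE) auto
  have F_le: "F \<le> 8 * (M4 + G4)"
  proof -
    have "F \<le> (\<integral>p. 8 * ((fst p)^4 + (snd p)^4) \<partial>P)"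
      unfolding F_def using d4 f4 s4 by (intro integral_mono) (auto simp: \<delta>_def four_ineq')
    also have "\<dots> = 8 * ((\<integral>p. (fst p)^4 \<partial>P) + (\<integral>p. (snd p)^4 \<partial>P))" using f4 s4 by simp
    also have "(\<integral>p. (fst p)^4 \<partial>P) = M4" unfolding M4_def using I_fst[of "\<lambda>t. t^4"] by simp
    also have "(\<integral>p. (snd p)^4 \<partial>P) = G4" unfolding G4_def using I_snd[of "\<lambda>t. t^4"] by simp
    finally show ?thesis .
  qed
  have S_m: "S \<in> sets P"
  proof -
    have "{p \<in> space (borel \<Otimes>\<^sub>M borel). fst p \<noteq> (snd p :: real)} \<in> sets (borel \<Otimes>\<^sub>M borel)"
      by measurable
    then show ?thesis by (simp add: S_def sP space_pair_measure)
  qed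
  have V2: "V^2 \<le> measure P S * F"
  proof -
    have ind2: "(\<lambda>p. (indicator S p :: real)^2) = indicator S"
      by (auto simp: indicator_def fun_eq_iff)
    have indI: "integrable P (indicator S :: _ \<Rightarrow> real)"
      using S_m sp_P by (simp add: integrable_indicator_iff less_top[symmetric])
    have "V = (\<integral>p. indicator S p * (\<delta> p)^2 \<partial>P)"
      unfolding V_def by (intro Bochner_Integration.integral_cong) (auto simp: S_def \<delta>_def indicator_def)
    also have "(\<dots>)^2 \<le> (\<integral>p. (indicator S p)^2 \<partial>P) * (\<integral>p. ((\<delta> p)^2)^2 \<partial>P)"
    proof (rule CS_integral)
      show "integrable P (\<lambda>p. (indicator S p :: real)^2)"
        using indI by (simp only: ind2)
      show "integrable P (\<lambda>p. ((\<delta> p)^2)^2)" using d4 by simp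
      have "(\<lambda>p. indicator S p * (\<delta> p)^2) = (\<lambda>p. (\<delta> p)^2)"
        by (auto simp: S_def \<delta>_def indicator_def fun_eq_iff)
      then show "integrable P (\<lambda>p. indicator S p * (\<delta> p)^2)" using d2 by simp
    qed
    also have "(\<integral>p. (indicator S p :: real)^2 \<partial>P) = measure P S"
      using sp_P by (simp only: ind2 integral_indicator) simp
    also have "(\<integral>p. ((\<delta> p)^2)^2 \<partial>P) = F" unfolding F_def by simp
    finally show ?thesis .
  qed

  define \<Omega> where "\<Omega> = PiM (UNIV :: 'n set) (\<lambda>_. P)"
  interpret Om: prob_space \<Omega> unfolding \<Omega>_def by (intro prob_space_PiM P.prob_space_axioms)
  have compP: "distr \<Omega> P (\<lambda>\<omega>. \<omega> i) = P" for i
    unfolding \<Omega>_def by (rule distr_PiM_component) (auto intro: P.prob_space_axioms)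
  have comp_m: "(\<lambda>\<omega>. \<omega> i) \<in> measurable \<Omega> P" for i
    unfolding \<Omega>_def by (rule measurable_component_singleton) simp
  have intO: "integrable \<Omega> (\<lambda>\<omega>. g (\<omega> i)) \<longleftrightarrow> integrable P g" if "g \<in> borel_measurable P" for g :: "real \<times> real \<Rightarrow> real" and i
    using integrable_distr_eq[OF comp_m that] compP by simp
  have IO: "(\<integral>\<omega>. g (\<omega> i) \<partial>\<Omega>) = (\<integral>p. g p \<partial>P)" if "g \<in> borel_measurable P" for g :: "real \<times> real \<Rightarrow> real" and i
    using integral_distr[OF comp_m that] compP by simp
  define dd where "dd = (\<lambda>(i::'n) (\<omega>::'n \<Rightarrow> real \<times> real). \<delta> (\<omega> i))"
  have dd_m: "dd i \<in> borel_measurable \<Omega>" for i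
    unfolding dd_def using measurable_compose[OF comp_m \<delta>_m] by simp
  have dd1: "integrable \<Omega> (dd i)" for i
    unfolding dd_def using intO[OF \<delta>_m] d1 by simp
  have dd2: "integrable \<Omega> (\<lambda>\<omega>. (dd i \<omega>)^2)" for i
  proof -
    have "(\<lambda>p. (\<delta> p)^2) \<in> borel_measurable P" using \<delta>_m by simp
    then show ?thesis unfolding dd_def using intO d2 by blast
  qed
  have Edd2: "(\<integral>\<omega>. (dd i \<omega>)^2 \<partial>\<Omega>) = V" for i
  proof -
    have "(\<lambda>p. (\<delta> p)^2) \<in> borel_measurable P" using \<delta>_m by simp
    then show ?thesis unfolding dd_def V_def by (rule IO)
  qed
  have ddij: "integrable \<Omega> (\<lambda>\<omega>. dd i \<omega> * dd j \<omega>)" for i j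
  proof (rule Bochner_Integration.integrable_bound)
    show "integrable \<Omega> (\<lambda>\<omega>. (dd i \<omega>)^2 + (dd j \<omega>)^2)" using dd2 by simp
    show "(\<lambda>\<omega>. dd i \<omega> * dd j \<omega>) \<in> borel_measurable \<Omega>" using dd_m by simp
    show "AE \<omega> in \<Omega>. norm (dd i \<omega> * dd j \<omega>) \<le> norm ((dd i \<omega>)^2 + (dd j \<omega>)^2)"
      using abs_mult_le_sq by auto
  qed
  interpret PP: product_prob_space "\<lambda>_::'n. P" by (rule product_prob_spaceI) (rule P.prob_space_axioms)
  have Ecross: "(\<integral>\<omega>. dd i \<omega> * dd j \<omega> \<partial>\<Omega>) = (if i = j then V else 0)" for i j
  proof (cases "i = j")
    case True
    then show ?thesis using Edd2[of i] by (simp add: power2_eq_square)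
  next
    case False
    define f where "f = (\<lambda>k. if k = i \<or> k = j then \<delta> else (\<lambda>_. 1))"
    have "(\<integral>\<omega>. (\<Prod>k\<in>UNIV. f k (\<omega> k)) \<partial>\<Omega>) = (\<Prod>k\<in>UNIV. (\<integral>p. f k p \<partial>P))"
      unfolding \<Omega>_def by (rule PP.product_integral_prod) (auto simp: f_def d1)
    also have "\<dots> = 0"
      by (rule prod_zero) (auto simp: f_def Ed intro!: bexI[of _ i])
    also have "(\<lambda>\<omega>. (\<Prod>k\<in>UNIV. f k (\<omega> k))) = (\<lambda>\<omega>. dd i \<omega> * dd j \<omega>)"
    proof
      fix \<omega> :: "'n \<Rightarrow> real \<times> real"
      have "(\<Prod>k\<in>UNIV. f k (\<omega> k)) = (\<Prod>k\<in>{i, j}. f k (\<omega> k))"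
        by (rule prod.mono_neutral_right) (auto simp: f_def)
      also have "\<dots> = dd i \<omega> * dd j \<omega>" using False by (simp add: f_def dd_def)
      finally show "(\<Prod>k\<in>UNIV. f k (\<omega> k)) = dd i \<omega> * dd j \<omega>" .
    qed
    finally show ?thesis using False by simp
  qed
  define Z where "Z = (\<lambda>\<omega>. \<Sum>i\<in>UNIV. dd i \<omega> * x i)"
  have Z2_eq: "(\<lambda>\<omega>. (Z \<omega>)^2) = (\<lambda>\<omega>. \<Sum>i\<in>UNIV. \<Sum>j\<in>UNIV. x i * x j * (dd i \<omega> * dd j \<omega>))"
    by (auto simp: Z_def power2_eq_square sum_product fun_eq_iff mult_ac intro!: sum.cong)
  have Z2_int: "integrable \<Omega> (\<lambda>\<omega>. (Z \<omega>)^2)"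
    unfolding Z2_eq using ddij by auto
  have EZ2: "(\<integral>\<omega>. (Z \<omega>)^2 \<partial>\<Omega>) = V"
  proof -
    have "(\<integral>\<omega>. (Z \<omega>)^2 \<partial>\<Omega>) = (\<Sum>i\<in>UNIV. \<Sum>j\<in>UNIV. x i * x j * (\<integral>\<omega>. dd i \<omega> * dd j \<omega> \<partial>\<Omega>))"
      unfolding Z2_eq using ddij by (simp add: integral_sum)
    also have "\<dots> = (\<Sum>i\<in>UNIV. (x i)^2 * V)"
      by (simp add: Ecross power2_eq_square if_distrib cong: if_cong)
    also have "\<dots> = V" using x1 by (simp add: sum_distrib_right[symmetric])
    finally show ?thesis .
  qed
  have Z_m: "Z \<in> borel_measurable \<Omega>" unfolding Z_def using dd_m by simp
  have absZ: "(\<integral>\<omega>. \<bar>Z \<omega>\<bar> \<partial>\<Omega>)^2 \<le> V"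
  proof -
    have "(\<integral>\<omega>. \<bar>Z \<omega>\<bar> * 1 \<partial>\<Omega>)^2 \<le> (\<integral>\<omega>. \<bar>Z \<omega>\<bar>^2 \<partial>\<Omega>) * (\<integral>\<omega>. 1^2 \<partial>\<Omega>)"
    proof (rule CS_integral)
      show "integrable \<Omega> (\<lambda>\<omega>. \<bar>Z \<omega>\<bar>^2)" using Z2_int by simp
      show "integrable \<Omega> (\<lambda>\<omega>. (1::real)^2)" by simp
      show "integrable \<Omega> (\<lambda>\<omega>. \<bar>Z \<omega>\<bar> * 1)"
      proof (rule Bochner_Integration.integrable_bound)
        show "integrable \<Omega> (\<lambda>\<omega>. 1 + (Z \<omega>)^2)" using Z2_int by simp
        show "(\<lambda>\<omega>. \<bar>Z \<omega>\<bar> * 1) \<in> borel_measurable \<Omega>" using Z_m by simp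
        show "AE \<omega> in \<Omega>. norm (\<bar>Z \<omega>\<bar> * 1) \<le> norm (1 + (Z \<omega>)^2)"
          using abs_le_sq by (auto simp: add_nonneg_nonneg)
      qed
    qed
    then show ?thesis using EZ2 by (simp add: Om.prob_space)
  qed

  define A where "A = PiM (UNIV :: 'n set) (\<lambda>_. \<mu>)"
  define G where "G = PiM (UNIV :: 'n set) (\<lambda>_. gauss)"
  have fst_mu: "fst \<in> measurable P \<mu>" using fst_m by (simp add: measurable_cong_sets[OF refl sm])
  have snd_g: "snd \<in> measurable P gauss" using snd_m by (simp add: measurable_cong_sets[OF refl gauss_sets])
  have dPm: "distr P \<mu> fst = \<mu>"
  proof -
    have "distr P \<mu> fst = distr P borel fst" by (rule distr_cong) (auto simp: sm)
    then show ?thesis using marg1 by simp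
  qed
  have dPg: "distr P gauss snd = gauss"
  proof -
    have "distr P gauss snd = distr P borel snd" by (rule distr_cong) (auto simp: gauss_sets)
    then show ?thesis using marg2 by simp
  qed
  have distrA: "distr \<Omega> A (\<lambda>\<omega>. \<lambda>i\<in>UNIV. fst (\<omega> i)) = A"
    using distr_PiM_finite_prob_space'[of "UNIV :: 'n set" "\<lambda>_. P" "\<lambda>_. \<mu>" fst]
      P.prob_space_axioms pm fst_mu dPm
    unfolding \<Omega>_def A_def compose_def by simp
  have distrG: "distr \<Omega> G (\<lambda>\<omega>. \<lambda>i\<in>UNIV. snd (\<omega> i)) = G"
    using distr_PiM_finite_prob_space'[of "UNIV :: 'n set" "\<lambda>_. P" "\<lambda>_. gauss" snd]
      P.prob_space_axioms gauss_prob snd_g dPg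
    unfolding \<Omega>_def G_def compose_def by simp
  have rA: "(\<lambda>\<omega>. \<lambda>i\<in>UNIV. fst (\<omega> i)) \<in> measurable \<Omega> A"
    unfolding A_def by (rule measurable_restrict) (rule measurable_compose[OF comp_m fst_mu])
  have rG: "(\<lambda>\<omega>. \<lambda>i\<in>UNIV. snd (\<omega> i)) \<in> measurable \<Omega> G"
    unfolding G_def by (rule measurable_restrict) (rule measurable_compose[OF comp_m snd_g])
  have compA: "(\<lambda>a. a i) \<in> borel_measurable A" for i
    using measurable_component_singleton[of i UNIV "\<lambda>_. \<mu>"] unfolding A_def
    by (simp add: measurable_cong_sets[OF refl sm])
  have compG: "(\<lambda>a. a i) \<in> borel_measurable G" for i
    using measurable_component_singleton[of i UNIV "\<lambda>_. gauss"] unfolding G_def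
    by (simp add: measurable_cong_sets[OF refl gauss_sets])
  define ip where "ip = (\<lambda>a::'n \<Rightarrow> real. \<Sum>i\<in>UNIV. a i * x i)"
  have ipA: "ip \<in> borel_measurable A" unfolding ip_def using compA by simp
  have ipG: "ip \<in> borel_measurable G" unfolding ip_def using compG by simp
  define U where "U = (\<lambda>\<omega>::'n \<Rightarrow> real \<times> real. \<Sum>i\<in>UNIV. fst (\<omega> i) * x i)"
  define W where "W = (\<lambda>\<omega>::'n \<Rightarrow> real \<times> real. \<Sum>i\<in>UNIV. snd (\<omega> i) * x i)"
  have EA: "(\<integral>a. \<bar>ip a\<bar> \<partial>A) = (\<integral>\<omega>. \<bar>U \<omega>\<bar> \<partial>\<Omega>)"
  proof -
    have "(\<integral>a. \<bar>ip a\<bar> \<partial>A) = (\<integral>a. \<bar>ip a\<bar> \<partial>distr \<Omega> A (\<lambda>\<omega>. \<lambda>i\<in>UNIV. fst (\<omega> i)))"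
      using distrA by simp
    also have "\<dots> = (\<integral>\<omega>. \<bar>ip (\<lambda>i\<in>UNIV. fst (\<omega> i))\<bar> \<partial>\<Omega>)"
      using ipA by (intro integral_distr[OF rA]) simp
    finally show ?thesis by (simp add: ip_def U_def)
  qed
  have EG: "(\<integral>\<omega>. \<bar>W \<omega>\<bar> \<partial>\<Omega>) = sqrt (2 / pi)"
  proof -
    have "(\<integral>a. \<bar>ip a\<bar> \<partial>G) = (\<integral>a. \<bar>ip a\<bar> \<partial>distr \<Omega> G (\<lambda>\<omega>. \<lambda>i\<in>UNIV. snd (\<omega> i)))"
      using distrG by simp
    also have "\<dots> = (\<integral>\<omega>. \<bar>ip (\<lambda>i\<in>UNIV. snd (\<omega> i))\<bar> \<partial>\<Omega>)"
      using ipG by (intro integral_distr[OF rG]) simp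
    finally have "(\<integral>a. \<bar>ip a\<bar> \<partial>G) = (\<integral>\<omega>. \<bar>W \<omega>\<bar> \<partial>\<Omega>)" by (simp add: ip_def W_def)
    moreover have "(\<integral>a. \<bar>ip a\<bar> \<partial>G) = sqrt (2 / pi)"
      unfolding ip_def G_def by (rule gauss_abs_ip[OF x1])
    ultimately show ?thesis by simp
  qed
  have fstO: "integrable \<Omega> (\<lambda>\<omega>. fst (\<omega> i))" for i using intO[OF fst_m, of i] f1 by simp
  have sndO: "integrable \<Omega> (\<lambda>\<omega>. snd (\<omega> i))" for i using intO[OF snd_m, of i] s1 by simp
  have U_int: "integrable \<Omega> U" unfolding U_def using fstO by simp
  have W_int: "integrable \<Omega> W" unfolding W_def using sndO by simp
  have UWZ: "U \<omega> - W \<omega> = Z \<omega>" for \<omega>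
    unfolding U_def W_def Z_def dd_def \<delta>_def by (simp add: sum_subtractf[symmetric] algebra_simps)
  have Z_int: "integrable \<Omega> Z"
  proof -
    have "Z = (\<lambda>\<omega>. U \<omega> - W \<omega>)" using UWZ by (simp add: fun_eq_iff)
    then show ?thesis using U_int W_int by simp
  qed
  define D0 where "D0 = \<bar>(\<integral>a. \<bar>ip a\<bar> \<partial>A) - sqrt (2 / pi)\<bar>"
  have D0_le: "D0 \<le> (\<integral>\<omega>. \<bar>Z \<omega>\<bar> \<partial>\<Omega>)"
  proof -
    have "(\<integral>a. \<bar>ip a\<bar> \<partial>A) - sqrt (2 / pi) = (\<integral>\<omega>. \<bar>U \<omega>\<bar> - \<bar>W \<omega>\<bar> \<partial>\<Omega>)"
      using EA EG U_int W_int by simp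
    moreover have "(\<integral>\<omega>. \<bar>U \<omega>\<bar> - \<bar>W \<omega>\<bar> \<partial>\<Omega>) \<le> (\<integral>\<omega>. \<bar>Z \<omega>\<bar> \<partial>\<Omega>)"
      using U_int W_int Z_int UWZ by (intro integral_mono) (auto, metis abs_triangle_ineq2)
    moreover have "- (\<integral>\<omega>. \<bar>U \<omega>\<bar> - \<bar>W \<omega>\<bar> \<partial>\<Omega>) \<le> (\<integral>\<omega>. \<bar>Z \<omega>\<bar> \<partial>\<Omega>)"
    proof -
      have "(\<integral>\<omega>. \<bar>W \<omega>\<bar> - \<bar>U \<omega>\<bar> \<partial>\<Omega>) \<le> (\<integral>\<omega>. \<bar>Z \<omega>\<bar> \<partial>\<Omega>)"
        using U_int W_int Z_int UWZ by (intro integral_mono) (auto, metis abs_minus_commute abs_triangle_ineq2)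
      moreover have "(\<integral>\<omega>. \<bar>W \<omega>\<bar> - \<bar>U \<omega>\<bar> \<partial>\<Omega>) = - (\<integral>\<omega>. \<bar>U \<omega>\<bar> - \<bar>W \<omega>\<bar> \<partial>\<Omega>)"
        using U_int W_int by simp
      ultimately show ?thesis by simp
    qed
    ultimately show ?thesis unfolding D0_def by linarith
  qed
  have eps_nn: "0 \<le> \<epsilon>" using pS measure_nonneg[of P S] by linarith
  define WW where "WW = M4 + G4"
  have WW_nn: "0 \<le> WW" unfolding WW_def using M4_nn G4_nn by simp
  have D0_nn: "0 \<le> D0" unfolding D0_def by simp
  have EZ_nn: "0 \<le> (\<integral>\<omega>. \<bar>Z \<omega>\<bar> \<partial>\<Omega>)" by (rule integral_nonneg_AE) auto
  have "D0^4 \<le> ((\<integral>\<omega>. \<bar>Z \<omega>\<bar> \<partial>\<Omega>)^2)^2"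
    using D0_le D0_nn by (simp add: power_mono flip: power_mult)
  also have "\<dots> \<le> V^2" using absZ EZ_nn by (intro power_mono) auto
  also have "\<dots> \<le> measure P S * F" by (rule V2)
  also have "\<dots> \<le> \<epsilon> * (8 * WW)"
  proof (rule mult_mono)
    show "measure P S \<le> \<epsilon>" by (rule pS)
    show "F \<le> 8 * WW" using F_le unfolding WW_def .
    show "0 \<le> \<epsilon>" by (rule eps_nn)
    show "0 \<le> F" unfolding F_def by (rule integral_nonneg_AE) (auto simp: zero_le_even_power)
  qed
  also have "\<dots> \<le> (4 * WW powr (1/4) * \<epsilon> powr (1/4))^4"
  proof -
    have "(4 * WW powr (1/4) * \<epsilon> powr (1/4))^4 = 256 * (WW powr (1/4))^4 * (\<epsilon> powr (1/4))^4"
      by (simp add: power_mult_distrib)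
    also have "\<dots> = 256 * WW * \<epsilon>" using pow4_powr[OF WW_nn] pow4_powr[OF eps_nn] by simp
    finally show ?thesis using WW_nn eps_nn by (simp add: mult_nonneg_nonneg)
  qed
  finally have D0_4: "D0^4 \<le> (4 * WW powr (1/4) * \<epsilon> powr (1/4))^4" .
  have bound: "D0 \<le> 4 * WW powr (1/4) * \<epsilon> powr (1/4)"
    using D0_4 D0_nn by (subst power_mono_iff[symmetric, of _ _ 4]) auto
  interpret AA: prob_space A unfolding A_def by (intro prob_space_PiM pm)
  have compAd: "distr A \<mu> (\<lambda>a. a i) = \<mu>" for i
    unfolding A_def by (rule distr_PiM_component) (auto intro: pm)
  have aiA: "integrable A (\<lambda>a. a i)" for i
  proof -
    have "(\<lambda>t::real. t) \<in> borel_measurable \<mu>" by (simp add: mb)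
    moreover have "(\<lambda>a. a i) \<in> measurable A \<mu>" unfolding A_def by (rule measurable_component_singleton) simp
    ultimately show ?thesis using integrable_distr_eq[of "\<lambda>a. a i" A \<mu> "\<lambda>t. t"] compAd m1 by simp
  qed
  have sgn_m: "(\<lambda>a. sign_pm (ip a)) \<in> borel_measurable A"
    unfolding sign_pm_def using ipA by measurable
  have sai: "integrable A (\<lambda>a. sign_pm (ip a) * a i)" for i
  proof (rule Bochner_Integration.integrable_bound)
    show "integrable A (\<lambda>a. a i)" by (rule aiA)
    show "(\<lambda>a. sign_pm (ip a) * a i) \<in> borel_measurable A" using sgn_m compA by simp
    show "AE a in A. norm (sign_pm (ip a) * a i) \<le> norm (a i)" by (auto simp: sign_pm_def)
  qed
  have first: "(\<Sum>i\<in>UNIV. (\<integral>a. sign_pm (ip a) * a i \<partial>A) * x i) = (\<integral>a. \<bar>ip a\<bar> \<partial>A)"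
  proof -
    have "(\<Sum>i\<in>UNIV. (\<integral>a. sign_pm (ip a) * a i \<partial>A) * x i) = (\<Sum>i\<in>UNIV. (\<integral>a. sign_pm (ip a) * a i * x i \<partial>A))"
      by simp
    also have "\<dots> = (\<integral>a. (\<Sum>i\<in>UNIV. sign_pm (ip a) * a i * x i) \<partial>A)"
      using Bochner_Integration.integral_sum[where I=UNIV and M=A and f="\<lambda>i a. sign_pm (ip a) * a i * x i"] sai by simp
    also have "\<dots> = (\<integral>a. \<bar>ip a\<bar> \<partial>A)"
    proof (intro Bochner_Integration.integral_cong refl)
      fix a :: "'n \<Rightarrow> real"
      have "(\<Sum>i\<in>UNIV. sign_pm (ip a) * a i * x i) = sign_pm (ip a) * ip a"
        unfolding ip_def by (simp add: sum_distrib_left mult.assoc)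
      also have "\<dots> = \<bar>ip a\<bar>" by (simp add: sign_pm_def)
      finally show "(\<Sum>i\<in>UNIV. sign_pm (ip a) * a i * x i) = \<bar>ip a\<bar>" .
    qed
    finally show ?thesis .
  qed
  show ?thesis
    unfolding Let_def
    using first bound unfolding D0_def WW_def M4_def G4_def A_def ip_def by simp
qed

end
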